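(* Let $G$ be an $n$-vertex graph of density $p$, and let $\mathcal Q,\mathcal P$ be partitions of $V(G)$ with $\mathcal Q$ refining $\mathcal P$. If $\mathcal D(\mathcal Q,\mathcal P)\ge xpn^2$ (for some $x\ge 0$), then $\mathcal H(\mathcal Q)-\mathcal H(\mathcal P)\ge 2x^2p$.
   Context: The density of $G=(V,E)$ is $2|E|/|V|^2$. $e(X,Y)$ is the number of ordered pairs $(u,v)\in X\times Y$ with $uv\in E(G)$ and $d(X,Y)=e(X,Y)/(|X||Y|)$. $H(x)=x\ln x$, $H(0)=0$. For a partition $\mathcal P$ of $V(G)$, $\mathcal H(\mathcal P)=\sum_{V,V'\in\mathcal P}\frac{|V||V'|}{n^2}H(d(V,V'))$, summed over ordered pairs. For $\mathcal P=\{V_1,\dots,V_k\}$ and a refinement $\mathcal Q$, $\mathcal Q|_{V_i}$ denotes the partition of $V_i$ induced by $\mathcal Q$, and $$\mathcal D(\mathcal Q,\mathcal P)=\frac12\sum_{i,j=1}^k\ \sum_{U\in\mathcal Q|_{V_i},\,U'\in\mathcal Q|_{V_j}}|U||U'|\,|d(U,U')-d(V_i,V_j)|.$$ *)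

theory Defs
  imports Complex_Main "HOL-Library.Disjoint_Sets"
begin

definition simple_graph :: "'a set \<Rightarrow> ('a \<Rightarrow> 'a \<Rightarrow> bool) \<Rightarrow> bool" where
  "simple_graph V E \<longleftrightarrow> finite V \<and> (\<forall>u v. E u v \<longrightarrow> u \<in> V \<and> v \<in> V)
     \<and> (\<forall>u v. E u v \<longrightarrow> E v u) \<and> (\<forall>u. \<not> E u u)"

definition edges :: "('a \<Rightarrow> 'a \<Rightarrow> bool) \<Rightarrow> 'a set set" where
  "edges E = {{u, v} | u v. E u v}"

definition density :: "'a set \<Rightarrow> ('a \<Rightarrow> 'a \<Rightarrow> bool) \<Rightarrow> real" where
  "density V E = 2 * real (card (edges E)) / (real (card V))^2"

definition epairs :: "('a \<Rightarrow> 'a \<Rightarrow> bool) \<Rightarrow> 'a set \<Rightarrow> 'a set \<Rightarrow> nat" where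
  "epairs E X Y = card {(u, v) \<in> X \<times> Y. E u v}"

definition pdens :: "('a \<Rightarrow> 'a \<Rightarrow> bool) \<Rightarrow> 'a set \<Rightarrow> 'a set \<Rightarrow> real" where
  "pdens E X Y = real (epairs E X Y) / (real (card X) * real (card Y))"

definition Hf :: "real \<Rightarrow> real" where
  "Hf x = (if x = 0 then 0 else x * ln x)"

definition Hpart :: "'a set \<Rightarrow> ('a \<Rightarrow> 'a \<Rightarrow> bool) \<Rightarrow> 'a set set \<Rightarrow> real" where
  "Hpart V E P = (\<Sum>X\<in>P. \<Sum>Y\<in>P.
      real (card X) * real (card Y) / (real (card V))^2 * Hf (pdens E X Y))"

definition refines_part :: "'a set set \<Rightarrow> 'a set set \<Rightarrow> bool" where
  "refines_part Q P \<longleftrightarrow> (\<forall>U\<in>Q. \<exists>W\<in>P. U \<subseteq> W)"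

definition Dpart :: "('a \<Rightarrow> 'a \<Rightarrow> bool) \<Rightarrow> 'a set set \<Rightarrow> 'a set set \<Rightarrow> real" where
  "Dpart E Q P = (1/2) * (\<Sum>Vi\<in>P. \<Sum>Vj\<in>P.
      \<Sum>U\<in>{U\<in>Q. U \<subseteq> Vi}. \<Sum>U'\<in>{U'\<in>Q. U' \<subseteq> Vj}.
        real (card U) * real (card U') * \<bar>pdens E U U' - pdens E Vi Vj\<bar>)"

end

theory Submission
  imports Defs
begin


lemma ln_lower:
  fixes t :: real assumes t: "t > 0"
  shows "ln t \<ge> (t-1)*(5*t+1)/(2*t*(t+2))"
proof -
  define D where "D = (\<lambda>s::real. ln s - (s-1)*(5*s+1)/(2*s*(s+2)))"
  have der: "DERIV D s :> (s-1)^3/(s^2*(s+2)^2)" if "s > 0" for s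
  proof -
    have "DERIV D s :> 1/s - (((1*(5*s+1) + (s-1)*5) * (2*s*(s+2)) - (s-1)*(5*s+1)*(2*(s+2) + 2*s*1)) / (2*s*(s+2))^2)"
      unfolding D_def using that
      by (auto intro!: derivative_eq_intros simp: power2_eq_square)
    moreover have "1/s - (((1*(5*s+1) + (s-1)*5) * (2*s*(s+2)) - (s-1)*(5*s+1)*(2*(s+2) + 2*s*1)) / (2*s*(s+2))^2) = (s-1)^3/(s^2*(s+2)^2)"
      proof -
      have "s+2 \<noteq> 0" "s \<noteq> 0" using that by auto
      then show ?thesis by (simp add: divide_simps) (simp add: algebra_simps power2_eq_square power3_eq_cube)
    qed
    ultimately show ?thesis by simp
  qed
  have D1: "D 1 = 0" by (simp add: D_def)
  have cont: "continuous_on {a..b} D" if "a > 0" for a b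
    apply (rule continuous_at_imp_continuous_on)
    using that by (auto intro: DERIV_isCont[OF der])
  show ?thesis
  proof (cases "t \<ge> 1")
    case True
    have "D 1 \<le> D t"
      apply (rule DERIV_nonneg_imp_increasing_open[OF True])
      subgoal for s apply (rule exI[of _ "(s-1)^3/(s^2*(s+2)^2)"]) using der[of s] by auto
      using cont by simp
    then show ?thesis using D1 by (simp add: D_def)
  next
    case False
    have "D 1 \<le> D t"
      apply (rule DERIV_nonpos_imp_decreasing_open[of t 1])
      using False apply simp
      subgoal for s proof -
        assume s: "t < s" "s < 1"
        have "(s-1)^3 = (s-1)*(s-1)^2" by (simp add: power3_eq_cube power2_eq_square)
        also have "\<dots> \<le> 0" using s by (intro mult_nonpos_nonneg) auto
        finally have "(s-1)^3 \<le> 0" .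
        then show "\<exists>y. DERIV D s :> y \<and> y \<le> 0" using der[of s] s t by (auto intro!: divide_nonpos_nonneg)
      qed
      using cont t by simp
    then show ?thesis using D1 by (simp add: D_def)
  qed
qed

lemma key2:
  fixes a b :: real assumes a: "a \<ge> 0" and b: "b > 0"
  shows "Hf a - Hf b - (ln b + 1)*(a-b) \<ge> 3*(a-b)^2/(2*a+4*b)"
proof (cases "a = 0")
  case True
  have "3*(a-b)^2/(2*a+4*b) = 3*b/4" using True b by (simp add: power2_eq_square)
  also have "\<dots> \<le> b" using b by simp
  also have "b = Hf a - Hf b - (ln b + 1)*(a-b)" using True b by (simp add: Hf_def algebra_simps)
  finally show ?thesis .
next
  case False
  then have a0: "a > 0" using a by simp
  define t where "t = a/b"
  have t0: "t > 0" using a0 b by (simp add: t_def)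
  have lnt: "ln t = ln a - ln b" using a0 b by (simp add: t_def ln_div)
  have LHS: "Hf a - Hf b - (ln b + 1)*(a-b) = a * ln t - a + b"
    using a0 b by (simp add: Hf_def lnt algebra_simps)
  have "a * ln t \<ge> a * ((t-1)*(5*t+1)/(2*t*(t+2)))"
    using ln_lower[OF t0] a0 by (intro mult_left_mono) auto
  also have "a * ((t-1)*(5*t+1)/(2*t*(t+2))) = (a-b)*(5*a+b)/(2*(a+2*b))"
  proof -
    have "a+2*b \<noteq> 0" "a \<noteq> 0" "b \<noteq> 0" "a/b+2 \<noteq> 0" using a0 b by (auto simp: add_pos_pos)
      (metis add_pos_pos divide_pos_pos zero_less_numeral less_irrefl)
    then show ?thesis unfolding t_def by (simp add: divide_simps)
  qed
  finally have "a * ln t \<ge> (a-b)*(5*a+b)/(2*(a+2*b))" .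
  moreover have "(a-b)*(5*a+b)/(2*(a+2*b)) - a + b = 3*(a-b)^2/(2*a+4*b)"
    using a0 b by (simp add: field_simps power2_eq_square)
  ultimately show ?thesis using LHS by linarith
qed

lemma pointwise:
  fixes a b x :: real assumes a: "a \<ge> 0" and b: "b > 0" and x: "x \<ge> 0"
  shows "Hf a - Hf b - (ln b + 1)*(a-b) \<ge> 2*x*\<bar>a-b\<bar> - x^2*(2*a+4*b)/3"
proof -
  define c where "c = (2*a+4*b)/3"
  have c0: "c > 0" using a b by (simp add: c_def)
  have "3*(a-b)^2/(2*a+4*b) = \<bar>a-b\<bar>^2 / c" by (simp add: c_def)
  moreover have "\<bar>a-b\<bar>^2 / c + x^2 * c - 2*x*\<bar>a-b\<bar> = (\<bar>a-b\<bar> - x*c)^2 / c"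
    using c0 by (simp add: field_simps power2_eq_square)
  moreover have "(\<bar>a-b\<bar> - x*c)^2 / c \<ge> 0" using c0 by simp
  ultimately have "3*(a-b)^2/(2*a+4*b) \<ge> 2*x*\<bar>a-b\<bar> - x^2*c" by linarith
  then show ?thesis using key2[OF a b] by (simp add: c_def)
qed

lemma blk_abstract:
  fixes w a :: "'i \<Rightarrow> real"
  assumes I: "finite I" and w: "\<forall>i\<in>I. w i > 0" and a: "\<forall>i\<in>I. a i \<ge> 0" and b: "b \<ge> 0" and x: "x \<ge> 0"
    and avg: "(\<Sum>i\<in>I. w i * a i) = b * (\<Sum>i\<in>I. w i)"
  shows "(\<Sum>i\<in>I. w i * (Hf (a i) - Hf b)) \<ge> 2*x*(\<Sum>i\<in>I. w i * \<bar>a i - b\<bar>) - 2*x^2*b*(\<Sum>i\<in>I. w i)"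
proof (cases "b = 0")
  case True
  have "\<forall>i\<in>I. w i * a i = 0"
  proof -
    have "\<forall>i\<in>I. 0 \<le> w i * a i" using w a by (simp add: less_imp_le)
    then show ?thesis using avg True I sum_nonneg_eq_0_iff[of I "\<lambda>i. w i * a i"] by auto
  qed
  then have "\<forall>i\<in>I. a i = 0" using w by force
  then show ?thesis using True by (simp add: Hf_def)
next
  case False
  then have b0: "b > 0" using b by simp
  have "(\<Sum>i\<in>I. w i * (Hf (a i) - Hf b)) = (\<Sum>i\<in>I. w i * (Hf (a i) - Hf b - (ln b + 1)*(a i - b))) + (ln b + 1) * ((\<Sum>i\<in>I. w i * a i) - b * (\<Sum>i\<in>I. w i))"
    by (simp add: algebra_simps sum.distrib sum_subtractf sum_distrib_left)
  also have "\<dots> = (\<Sum>i\<in>I. w i * (Hf (a i) - Hf b - (ln b + 1)*(a i - b)))" using avg by simp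
  also have "\<dots> \<ge> (\<Sum>i\<in>I. w i * (2*x*\<bar>a i-b\<bar> - x^2*(2*a i+4*b)/3))"
    using pointwise[OF _ b0 x] w a by (intro sum_mono mult_left_mono) (auto simp: less_imp_le)
  moreover have "(\<Sum>i\<in>I. w i * (2*x*\<bar>a i-b\<bar> - x^2*(2*a i+4*b)/3)) = (\<Sum>i\<in>I. 2*x*(w i*\<bar>a i-b\<bar>) - (x^2/3*2)*(w i * a i) - (x^2/3*4*b)*w i)"
    by (rule sum.cong) (auto simp: algebra_simps)
  moreover have "\<dots> = 2*x*(\<Sum>i\<in>I. w i * \<bar>a i - b\<bar>) - (x^2/3*2)*(\<Sum>i\<in>I. w i * a i) - (x^2/3*4*b)*(\<Sum>i\<in>I. w i)"
    by (simp add: sum_subtractf sum_distrib_left)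
  ultimately show ?thesis using avg by (simp add: algebra_simps)
qed



lemma part_basic:
  assumes "partition_on V P" "finite V"
  shows "finite P" "\<And>X. X \<in> P \<Longrightarrow> finite X \<and> X \<noteq> {} \<and> X \<subseteq> V"
proof -
  have "P \<subseteq> Pow V" using assms(1) unfolding partition_on_def by auto
  then show "finite P" by (rule finite_subset) (simp add: assms(2))
  fix X assume "X \<in> P"
  then have s: "X \<subseteq> V" "X \<noteq> {}" using assms(1) unfolding partition_on_def by auto
  then show "finite X \<and> X \<noteq> {} \<and> X \<subseteq> V" using assms(2) finite_subset by auto
qed

lemma part_uniq:
  assumes "partition_on V P" "W1 \<in> P" "W2 \<in> P" "U \<noteq> {}" "U \<subseteq> W1" "U \<subseteq> W2"
  shows "W1 = W2"
  using assms unfolding partition_on_def disjoint_def by blast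

lemma blk_part:
  assumes P: "partition_on V P" and Q: "partition_on V Q" and R: "refines_part Q P" and W: "W \<in> P"
  shows "partition_on W {U\<in>Q. U \<subseteq> W}"
proof (rule partition_onI)
  show "\<Union>{U\<in>Q. U \<subseteq> W} = W"
  proof
    show "\<Union>{U\<in>Q. U \<subseteq> W} \<subseteq> W" by auto
    show "W \<subseteq> \<Union>{U\<in>Q. U \<subseteq> W}"
    proof
      fix w assume w: "w \<in> W"
      then have "w \<in> V" using P W unfolding partition_on_def by auto
      then obtain U where U: "U \<in> Q" "w \<in> U" using Q unfolding partition_on_def by auto
      then obtain W' where W': "W' \<in> P" "U \<subseteq> W'" using R unfolding refines_part_def by auto
      have "W' = W" using P W W' w U unfolding partition_on_def disjoint_def by blast
      then show "w \<in> \<Union>{U\<in>Q. U \<subseteq> W}" using U W' by auto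
    qed
  qed
  show "\<And>A1 A2. A1 \<in> {U\<in>Q. U \<subseteq> W} \<Longrightarrow> A2 \<in> {U\<in>Q. U \<subseteq> W} \<Longrightarrow> A1 \<noteq> A2 \<Longrightarrow> disjnt A1 A2"
    using Q unfolding partition_on_def disjoint_def disjnt_def by auto
  show "{} \<notin> {U\<in>Q. U \<subseteq> W}" using Q unfolding partition_on_def by auto
qed

lemma reindex:
  assumes P: "partition_on V P" and Q: "partition_on V Q" and R: "refines_part Q P" and V: "finite V"
  shows "(\<Sum>W\<in>P. \<Sum>U\<in>{U\<in>Q. U \<subseteq> W}. f U) = (\<Sum>U\<in>Q. f U)"
proof -
  define g where "g U = (THE W. W \<in> P \<and> U \<subseteq> W)" for U
  have g: "g U \<in> P \<and> U \<subseteq> g U" if UQ: "U \<in> Q" for U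
  proof -
    obtain W where W: "W \<in> P" "U \<subseteq> W" using R UQ unfolding refines_part_def by auto
    have ne: "U \<noteq> {}" using Q UQ unfolding partition_on_def by auto
    have un: "W' = W" if "W' \<in> P \<and> U \<subseteq> W'" for W'
    proof -
      from that have "W' \<in> P" "U \<subseteq> W'" by auto
      then show ?thesis by (rule part_uniq[OF P _ W(1) ne _ W(2)])
    qed
    have "g U = W" unfolding g_def using W un by (intro the_equality) blast+
    then show ?thesis using W by simp
  qed
  have gi: "g U = W" if "U \<in> Q" "W \<in> P" "U \<subseteq> W" for U W
  proof -
    have ne: "U \<noteq> {}" using Q that unfolding partition_on_def by auto
    have "g U \<in> P" "U \<subseteq> g U" using g[OF that(1)] by auto
    then show ?thesis by (rule part_uniq[OF P _ that(2) ne _ that(3)])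
  qed
  have "(\<Sum>W\<in>P. \<Sum>U\<in>{U\<in>Q. U \<subseteq> W}. f U) = (\<Sum>W\<in>P. \<Sum>U\<in>{U. U\<in>Q \<and> g U = W}. f U)"
  proof (rule sum.cong[OF refl])
    fix W assume W: "W \<in> P"
    have "{U\<in>Q. U \<subseteq> W} = {U. U\<in>Q \<and> g U = W}"
    proof (intro set_eqI iffI)
      fix U assume "U \<in> {U\<in>Q. U \<subseteq> W}" then show "U \<in> {U. U\<in>Q \<and> g U = W}" using gi W by simp
    next
      fix U assume "U \<in> {U. U\<in>Q \<and> g U = W}" then show "U \<in> {U\<in>Q. U \<subseteq> W}" using g by force
    qed
    then show "(\<Sum>U\<in>{U\<in>Q. U \<subseteq> W}. f U) = (\<Sum>U\<in>{U. U\<in>Q \<and> g U = W}. f U)" by simp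
  qed
  also have "\<dots> = (\<Sum>U\<in>Q. f U)"
  proof (rule sum.group)
    show "finite Q" "finite P" using part_basic[OF P V] part_basic[OF Q V] by auto
    show "g ` Q \<subseteq> P" using g by auto
  qed
  finally show ?thesis .
qed

lemma epairs_sum:
  assumes "finite X" "finite Y"
  shows "epairs E X Y = (\<Sum>u\<in>X. \<Sum>v\<in>Y. if E u v then 1 else 0)"
proof -
  have "{(u, v) \<in> X \<times> Y. E u v} = {p \<in> X \<times> Y. E (fst p) (snd p)}" by auto
  then have "epairs E X Y = (\<Sum>p\<in>{p \<in> X \<times> Y. E (fst p) (snd p)}. 1)" unfolding epairs_def by simp
  also have "\<dots> = (\<Sum>p\<in>X \<times> Y. if E (fst p) (snd p) then 1 else 0)"
    using assms by (subst sum.inter_filter) auto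
  also have "\<dots> = (\<Sum>u\<in>X. \<Sum>v\<in>Y. if E u v then 1 else 0)"
    by (simp add: sum.cartesian_product case_prod_beta)
  finally show ?thesis .
qed

lemma sum_part:
  assumes "partition_on X A" "finite X"
  shows "(\<Sum>u\<in>X. f u) = (\<Sum>U\<in>A. \<Sum>u\<in>U. f u)"
proof -
  have "X = \<Union>A" using assms unfolding partition_on_def by auto
  moreover have "(\<Sum>u\<in>\<Union>A. f u) = (\<Sum>U\<in>A. \<Sum>u\<in>U. f u)"
    using part_basic[OF assms] assms(1) unfolding partition_on_def disjoint_def
    by (subst sum.Union_disjoint) auto
  ultimately show ?thesis by simp
qed

lemma epairs_add:
  assumes A: "partition_on X A" and B: "partition_on Y B" and X: "finite X" and Y: "finite Y"
  shows "epairs E X Y = (\<Sum>U\<in>A. \<Sum>U'\<in>B. epairs E U U')"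
proof -
  have "epairs E X Y = (\<Sum>U\<in>A. \<Sum>u\<in>U. \<Sum>v\<in>Y. if E u v then 1 else 0)"
    using epairs_sum[OF X Y] sum_part[OF A X] by simp
  also have "\<dots> = (\<Sum>U\<in>A. \<Sum>u\<in>U. \<Sum>U'\<in>B. \<Sum>v\<in>U'. if E u v then 1 else 0)"
    by (intro sum.cong refl sum_part[OF B Y])
  also have "\<dots> = (\<Sum>U\<in>A. \<Sum>U'\<in>B. \<Sum>u\<in>U. \<Sum>v\<in>U'. if E u v then 1 else 0)"
    by (simp add: sum.swap[where A = B])
  also have "\<dots> = (\<Sum>U\<in>A. \<Sum>U'\<in>B. epairs E U U')"
    using part_basic[OF A X] part_basic[OF B Y] by (intro sum.cong refl) (simp add: epairs_sum)
  finally show ?thesis .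
qed

lemma card_add:
  assumes A: "partition_on X A" and X: "finite X"
  shows "card X = (\<Sum>U\<in>A. card U)"
proof -
  have "card X = (\<Sum>u\<in>X. 1)" by simp
  also have "\<dots> = (\<Sum>U\<in>A. \<Sum>u\<in>U. 1)" by (rule sum_part[OF A X])
  also have "\<dots> = (\<Sum>U\<in>A. card U)" by simp
  finally show ?thesis .
qed

lemma card_2_le: "card {x, y} \<le> 2"
  by (cases "x = y") auto

lemma eVV_le:
  assumes G: "simple_graph V E"
  shows "epairs E V V \<le> 2 * card (edges E)"
proof -
  have fin: "finite V" using G unfolding simple_graph_def by auto
  have sub: "edges E \<subseteq> Pow V" using G unfolding simple_graph_def edges_def by auto
  then have fe: "finite (edges E)" using fin by (meson finite_Pow_iff finite_subset)
  have "{(u, v) \<in> V \<times> V. E u v} \<subseteq> (\<Union>e\<in>edges E. {(u, v)\<in>V\<times>V. E u v \<and> {u,v} = e})"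
    unfolding edges_def by auto
  then have "epairs E V V \<le> card (\<Union>e\<in>edges E. {(u, v)\<in>V\<times>V. E u v \<and> {u,v} = e})"
  proof -
    have "(\<Union>e\<in>edges E. {(u, v)\<in>V\<times>V. E u v \<and> {u,v} = e}) \<subseteq> V \<times> V" by auto
    then have "finite (\<Union>e\<in>edges E. {(u, v)\<in>V\<times>V. E u v \<and> {u,v} = e})"
      using fin by (meson finite_SigmaI finite_subset)
    then show ?thesis unfolding epairs_def by (intro card_mono) (use \<open>{(u, v) \<in> V \<times> V. E u v} \<subseteq> _\<close> in auto)
  qed
  also have "\<dots> \<le> (\<Sum>e\<in>edges E. card {(u, v)\<in>V\<times>V. E u v \<and> {u,v} = e})"
    using fe by (rule card_UN_le)
  also have "\<dots> \<le> (\<Sum>e\<in>edges E. 2)"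
  proof (rule sum_mono)
    fix e assume "e \<in> edges E"
    then obtain a b where e: "e = {a,b}" unfolding edges_def by auto
    have "{(u, v)\<in>V\<times>V. E u v \<and> {u,v} = e} \<subseteq> {(a,b),(b,a)}"
      using e by (auto simp: doubleton_eq_iff)
    then have "card {(u, v)\<in>V\<times>V. E u v \<and> {u,v} = e} \<le> card {(a,b),(b,a)}" by (intro card_mono) auto
    also have "\<dots> \<le> 2" by (rule card_2_le)
    finally show "card {(u, v)\<in>V\<times>V. E u v \<and> {u,v} = e} \<le> 2" .
  qed
  finally show ?thesis by simp
qed



lemma pdens_nonneg: "pdens E X Y \<ge> 0"
  unfolding pdens_def by simp

lemma block_ineq:
  fixes V :: "'a set"
  assumes P: "partition_on V P" and Q: "partition_on V Q" and R: "refines_part Q P" and V: "finite V"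
    and W: "W \<in> P" and W': "W' \<in> P" and x: "x \<ge> 0"
  shows "(\<Sum>U\<in>{U\<in>Q. U \<subseteq> W}. \<Sum>U'\<in>{U'\<in>Q. U' \<subseteq> W'}. real (card U) * real (card U') * (Hf (pdens E U U') - Hf (pdens E W W')))
     \<ge> 2*x*(\<Sum>U\<in>{U\<in>Q. U \<subseteq> W}. \<Sum>U'\<in>{U'\<in>Q. U' \<subseteq> W'}. real (card U) * real (card U') * \<bar>pdens E U U' - pdens E W W'\<bar>)
       - 2*x^2*real (epairs E W W')"
proof -
  define A where "A = {U\<in>Q. U \<subseteq> W}"
  define B where "B = {U'\<in>Q. U' \<subseteq> W'}"
  define b where "b = pdens E W W'"
  have pA: "partition_on W A" unfolding A_def by (rule blk_part[OF P Q R W])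
  have pB: "partition_on W' B" unfolding B_def by (rule blk_part[OF P Q R W'])
  have fW: "finite W" "W \<noteq> {}" using part_basic(2)[OF P V W] by auto
  have fW': "finite W'" "W' \<noteq> {}" using part_basic(2)[OF P V W'] by auto
  have fA: "finite A" and cA: "\<And>U. U \<in> A \<Longrightarrow> finite U \<and> U \<noteq> {}" using part_basic[OF pA fW(1)] by auto
  have fB: "finite B" and cB: "\<And>U. U \<in> B \<Longrightarrow> finite U \<and> U \<noteq> {}" using part_basic[OF pB fW'(1)] by auto
  define w :: "'a set \<times> 'a set \<Rightarrow> real" where "w = (\<lambda>(U,U'). real (card U) * real (card U'))"
  define a :: "'a set \<times> 'a set \<Rightarrow> real" where "a = (\<lambda>(U,U'). pdens E U U')"
  have wpos: "\<forall>i\<in>A\<times>B. w i > 0"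
    using cA cB by (auto simp: w_def card_gt_0_iff)
  have wa: "w i * a i = real (epairs E (fst i) (snd i))" if iAB: "i \<in> A\<times>B" for i
  proof -
    obtain U U' where i: "i = (U,U')" "U \<in> A" "U' \<in> B" using iAB by auto
    have "card U > 0" "card U' > 0" using cA[OF i(2)] cB[OF i(3)] by (auto simp: card_gt_0_iff)
    then show ?thesis using i by (simp add: w_def a_def pdens_def)
  qed
  have sw: "(\<Sum>i\<in>A\<times>B. w i) = real (card W) * real (card W')"
  proof -
    have "(\<Sum>i\<in>A\<times>B. w i) = (\<Sum>U\<in>A. \<Sum>U'\<in>B. real (card U) * real (card U'))"
      by (simp add: sum.cartesian_product w_def)
    also have "\<dots> = (\<Sum>U\<in>A. real (card U)) * (\<Sum>U'\<in>B. real (card U'))"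
      by (simp add: sum_product)
    also have "\<dots> = real (card W) * real (card W')"
      using card_add[OF pA fW(1)] card_add[OF pB fW'(1)] by simp
    finally show ?thesis .
  qed
  have swa: "(\<Sum>i\<in>A\<times>B. w i * a i) = real (epairs E W W')"
  proof -
    have "(\<Sum>i\<in>A\<times>B. w i * a i) = (\<Sum>i\<in>A\<times>B. real (epairs E (fst i) (snd i)))"
      using wa by (rule sum.cong[OF refl])
    also have "\<dots> = (\<Sum>U\<in>A. \<Sum>U'\<in>B. real (epairs E U U'))"
      by (simp add: sum.cartesian_product case_prod_beta)
    also have "\<dots> = real (epairs E W W')"
      using epairs_add[OF pA pB fW(1) fW'(1), of E] by simp
    finally show ?thesis .
  qed
  have bW: "b * (real (card W) * real (card W')) = real (epairs E W W')"
    using fW fW' by (simp add: b_def pdens_def card_gt_0_iff)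
  have avg: "(\<Sum>i\<in>A\<times>B. w i * a i) = b * (\<Sum>i\<in>A\<times>B. w i)"
    using swa sw bW by simp
  have main: "(\<Sum>i\<in>A\<times>B. w i * (Hf (a i) - Hf b)) \<ge> 2*x*(\<Sum>i\<in>A\<times>B. w i * \<bar>a i - b\<bar>) - 2*x^2*b*(\<Sum>i\<in>A\<times>B. w i)"
    by (rule blk_abstract[OF _ wpos _ _ x avg]) (auto simp: fA fB a_def pdens_nonneg b_def)
  have e1: "(\<Sum>i\<in>A\<times>B. w i * (Hf (a i) - Hf b)) = (\<Sum>U\<in>A. \<Sum>U'\<in>B. real (card U) * real (card U') * (Hf (pdens E U U') - Hf b))"
    by (simp add: sum.cartesian_product w_def a_def case_prod_beta)
  have e2: "(\<Sum>i\<in>A\<times>B. w i * \<bar>a i - b\<bar>) = (\<Sum>U\<in>A. \<Sum>U'\<in>B. real (card U) * real (card U') * \<bar>pdens E U U' - b\<bar>)"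
    by (simp add: sum.cartesian_product w_def a_def case_prod_beta)
  have e3: "2*x^2*b*(\<Sum>i\<in>A\<times>B. w i) = 2*x^2*real (epairs E W W')"
    using sw bW by simp
  show ?thesis using main e1 e2 e3 unfolding A_def B_def b_def by simp
qed


lemma double_reindex:
  assumes P: "partition_on V P" and Q: "partition_on V Q" and R: "refines_part Q P" and V: "finite V"
  shows "(\<Sum>U\<in>Q. \<Sum>U'\<in>Q. F U U') = (\<Sum>W\<in>P. \<Sum>W'\<in>P. \<Sum>U\<in>{U\<in>Q. U \<subseteq> W}. \<Sum>U'\<in>{U'\<in>Q. U' \<subseteq> W'}. F U U')"
proof -
  have "(\<Sum>U\<in>Q. \<Sum>U'\<in>Q. F U U') = (\<Sum>U\<in>Q. \<Sum>W'\<in>P. \<Sum>U'\<in>{U'\<in>Q. U' \<subseteq> W'}. F U U')"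
    by (simp add: reindex[OF P Q R V])
  also have "\<dots> = (\<Sum>W\<in>P. \<Sum>U\<in>{U\<in>Q. U \<subseteq> W}. \<Sum>W'\<in>P. \<Sum>U'\<in>{U'\<in>Q. U' \<subseteq> W'}. F U U')"
    by (rule reindex[OF P Q R V, symmetric])
  also have "\<dots> = (\<Sum>W\<in>P. \<Sum>W'\<in>P. \<Sum>U\<in>{U\<in>Q. U \<subseteq> W}. \<Sum>U'\<in>{U'\<in>Q. U' \<subseteq> W'}. F U U')"
    by (rule sum.cong[OF refl]) (rule sum.swap)
  finally show ?thesis .
qed

theorem lemma3p6:
  fixes V :: "'a set" and E :: "'a \<Rightarrow> 'a \<Rightarrow> bool"
    and P Q :: "'a set set" and x :: real
  assumes "simple_graph V E"
    and "partition_on V P" and "partition_on V Q" and "refines_part Q P"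
    and "x \<ge> 0"
    and "Dpart E Q P \<ge> x * density V E * (real (card V))^2"
  shows "Hpart V E Q - Hpart V E P \<ge> 2 * x^2 * density V E"
proof -
  note G = assms(1) and P = assms(2) and Q = assms(3) and R = assms(4) and x = assms(5) and D = assms(6)
  have V: "finite V" using G unfolding simple_graph_def by auto
  define n2 where "n2 = (real (card V))^2"
  define blk where "blk W = {U\<in>Q. U \<subseteq> W}" for W
  define b where "b W W' = pdens E W W'" for W W'
  define LB where "LB W W' = (\<Sum>U\<in>blk W. \<Sum>U'\<in>blk W'. real (card U) * real (card U') * (Hf (pdens E U U') - Hf (b W W')))" for W W'
  define DB where "DB W W' = (\<Sum>U\<in>blk W. \<Sum>U'\<in>blk W'. real (card U) * real (card U') * \<bar>pdens E U U' - b W W'\<bar>)" for W W'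
  have Dp: "Dpart E Q P = (1/2) * (\<Sum>W\<in>P. \<Sum>W'\<in>P. DB W W')"
    unfolding Dpart_def DB_def blk_def b_def by simp
  have HQ: "Hpart V E Q = (\<Sum>W\<in>P. \<Sum>W'\<in>P. \<Sum>U\<in>blk W. \<Sum>U'\<in>blk W'. real (card U) * real (card U') * Hf (pdens E U U')) / n2"
  proof -
    have "Hpart V E Q = (\<Sum>U\<in>Q. \<Sum>U'\<in>Q. real (card U) * real (card U') * Hf (pdens E U U')) / n2"
      unfolding Hpart_def n2_def by (simp add: sum_divide_distrib)
    then show ?thesis unfolding blk_def by (simp add: double_reindex[OF P Q R V])
  qed
  have HP: "Hpart V E P = (\<Sum>W\<in>P. \<Sum>W'\<in>P. \<Sum>U\<in>blk W. \<Sum>U'\<in>blk W'. real (card U) * real (card U') * Hf (b W W')) / n2"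
  proof -
    have "Hpart V E P = (\<Sum>W\<in>P. \<Sum>W'\<in>P. real (card W) * real (card W') * Hf (b W W')) / n2"
      unfolding Hpart_def n2_def b_def by (simp add: sum_divide_distrib)
    also have "(\<Sum>W\<in>P. \<Sum>W'\<in>P. real (card W) * real (card W') * Hf (b W W')) = (\<Sum>W\<in>P. \<Sum>W'\<in>P. \<Sum>U\<in>blk W. \<Sum>U'\<in>blk W'. real (card U) * real (card U') * Hf (b W W'))"
    proof (intro sum.cong refl)
      fix W W' assume W: "W \<in> P" and W': "W' \<in> P"
      have fW: "finite W" "finite W'" using part_basic(2)[OF P V W] part_basic(2)[OF P V W'] by auto
      have "real (card W) * real (card W') = (\<Sum>U\<in>blk W. real (card U)) * (\<Sum>U'\<in>blk W'. real (card U'))"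
        using card_add[OF blk_part[OF P Q R W] fW(1)] card_add[OF blk_part[OF P Q R W'] fW(2)]
        unfolding blk_def by simp
      also have "\<dots> = (\<Sum>U\<in>blk W. \<Sum>U'\<in>blk W'. real (card U) * real (card U'))"
        by (rule sum_product)
      finally have "real (card W) * real (card W') * Hf (b W W') = (\<Sum>U\<in>blk W. \<Sum>U'\<in>blk W'. real (card U) * real (card U')) * Hf (b W W')"
        by simp
      also have "\<dots> = (\<Sum>U\<in>blk W. \<Sum>U'\<in>blk W'. real (card U) * real (card U') * Hf (b W W'))"
        by (simp add: sum_distrib_right)
      finally show "real (card W) * real (card W') * Hf (b W W') = (\<Sum>U\<in>blk W. \<Sum>U'\<in>blk W'. real (card U) * real (card U') * Hf (b W W'))" .
    qed
    finally show ?thesis .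
  qed
  have diff: "Hpart V E Q - Hpart V E P = (\<Sum>W\<in>P. \<Sum>W'\<in>P. LB W W') / n2"
    unfolding HQ HP LB_def
    by (simp add: diff_divide_distrib[symmetric] sum_subtractf[symmetric] right_diff_distrib)
  have LBge: "LB W W' \<ge> 2*x*DB W W' - 2*x^2*real (epairs E W W')" if "W \<in> P" "W' \<in> P" for W W'
    using block_ineq[OF P Q R V that x, of E] unfolding LB_def DB_def blk_def b_def by simp
  have eVV: "real (epairs E V V) = (\<Sum>W\<in>P. \<Sum>W'\<in>P. real (epairs E W W'))"
    using epairs_add[OF P P V V, of E] by simp
  have T: "(\<Sum>W\<in>P. \<Sum>W'\<in>P. LB W W') \<ge> 4*x*Dpart E Q P - 2*x^2*real (epairs E V V)"
  proof -
    have "(\<Sum>W\<in>P. \<Sum>W'\<in>P. LB W W') \<ge> (\<Sum>W\<in>P. \<Sum>W'\<in>P. 2*x*DB W W' - 2*x^2*real (epairs E W W'))"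
      using LBge by (intro sum_mono) auto
    also have "(\<Sum>W\<in>P. \<Sum>W'\<in>P. 2*x*DB W W' - 2*x^2*real (epairs E W W')) = 2*x*(\<Sum>W\<in>P. \<Sum>W'\<in>P. DB W W') - 2*x^2*(\<Sum>W\<in>P. \<Sum>W'\<in>P. real (epairs E W W'))"
      by (simp add: sum_subtractf sum_distrib_left)
    finally have "2*x*(\<Sum>W\<in>P. \<Sum>W'\<in>P. DB W W') - 2*x^2*(\<Sum>W\<in>P. \<Sum>W'\<in>P. real (epairs E W W')) \<le> (\<Sum>W\<in>P. \<Sum>W'\<in>P. LB W W')" .
    moreover have "4*x*Dpart E Q P = 2*x*(\<Sum>W\<in>P. \<Sum>W'\<in>P. DB W W')" using Dp by simp
    ultimately show ?thesis unfolding eVV by linarith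
  qed
  have ele: "real (epairs E V V) \<le> 2 * real (card (edges E))"
    using eVV_le[OF G] by linarith
  show ?thesis
  proof (cases "card V = 0")
    case True
    then show ?thesis by (simp add: Hpart_def density_def)
  next
    case False
    then have n2p: "n2 > 0" by (simp add: n2_def)
    have dens: "density V E * n2 = 2 * real (card (edges E))"
      using n2p unfolding density_def n2_def by simp
    have "(\<Sum>W\<in>P. \<Sum>W'\<in>P. LB W W') \<ge> 2 * x^2 * density V E * n2"
    proof -
      have "4*x*Dpart E Q P \<ge> 4*x*(x * density V E * n2)"
        using D x unfolding n2_def by (intro mult_left_mono) auto
      moreover have "2*x^2*real (epairs E V V) \<le> 2*x^2*(density V E * n2)"
        using ele dens by (intro mult_left_mono) auto
      ultimately show ?thesis using T by (simp add: power2_eq_square algebra_simps)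
    qed
    then show ?thesis using diff n2p by (simp add: pos_le_divide_eq)
  qed
qed


end
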